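(* Let there be $m$ workers and $n$ factories. Each worker $i\in[m]$ has a utility function $u_i\colon[n]\times\mathbb{R}_{\ge0}^n\to\mathbb{R}_{\ge0}$ such that $\boldsymbol{x}\mapsto u_i(j,\boldsymbol{x})$ is continuous for each $j$, and $u_i(j,\boldsymbol{x})=0$ whenever $x_j=0$. Let $k_1,\ldots,k_n$ be nonnegative integers with $\sum_{j=1}^n k_j=m$ and let $B>0$. Then there exists a wage vector $\boldsymbol{x}\in\mathbb{R}_{\ge0}^n$ with $\sum_{j=1}^n k_jx_j=B$ and an assignment of the workers to the factories in which exactly $k_j$ workers are assigned to each factory $j$ and every worker is happy, i.e., each worker $i$ assigned to factory $j$ satisfies $u_i(j,\boldsymbol{x})\ge u_i(j',\boldsymbol{x})$ for all $j'\in[n]$.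
   Context: Here $x_j$ is the (common) wage of a worker at factory $j$, and $u_i(j,\boldsymbol{x})$ is the utility for worker $i$ of working at factory $j$ when the wages are given by $\boldsymbol{x}$. *)

theory Defs
  imports "HOL-Analysis.Analysis"
begin

end

theory Submission
  imports Defs
begin


definition wset :: "('n::finite \<Rightarrow> nat) \<Rightarrow> real \<Rightarrow> (real^'n) set" where
  "wset k B = {x. (\<forall>j. 0 \<le> x$j) \<and> (\<forall>j. k j = 0 \<longrightarrow> x$j = 0) \<and> (\<Sum>j\<in>UNIV. real (k j) * x$j) = B}"

lemma wset_closed: "closed (wset k B)"
  unfolding wset_def
  by (intro closed_Collect_conj closed_Collect_all closed_Collect_imp closed_Collect_le
      closed_Collect_eq continuous_intros open_Collect_const)

lemma wset_bounded: "bounded (wset k B)"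
proof -
  have "wset k B \<subseteq> cbox 0 (\<chi> j. \<bar>B\<bar>)"
  proof
    fix x assume x: "x \<in> wset k B"
    have "0 \<le> x$j \<and> x$j \<le> \<bar>B\<bar>" for j
    proof -
      have nn: "\<And>j. 0 \<le> x$j" using x unfolding wset_def by auto
      show ?thesis
      proof (cases "k j = 0")
        case True then show ?thesis using x unfolding wset_def by auto
      next
        case False
        have "real (k j) * x$j \<le> (\<Sum>j\<in>UNIV. real (k j) * x$j)"
          by (rule member_le_sum) (auto simp: nn)
        also have "\<dots> = B" using x unfolding wset_def by auto
        finally have "real (k j) * x$j \<le> B" .
        moreover have "x$j \<le> real (k j) * x$j"
        proof -
          have "1 \<le> real (k j)" using False by simp
          then have "1 * x$j \<le> real (k j) * x$j" by (rule mult_right_mono) (rule nn)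
          then show ?thesis by simp
        qed
        ultimately show ?thesis using nn[of j] by linarith
      qed
    qed
    then show "x \<in> cbox 0 (\<chi> j. \<bar>B\<bar>)" by (simp add: mem_box_cart)
  qed
  then show ?thesis using bounded_cbox bounded_subset by blast
qed

lemma wset_compact: "compact (wset k B)"
  using wset_closed wset_bounded compact_eq_bounded_closed by blast

lemma wset_convex: fixes k :: "'n::finite \<Rightarrow> nat" shows "convex (wset k B)"
  unfolding convex_def
proof (intro ballI allI impI)
  fix x y :: "real^'n" and a b :: real
  assume x: "x \<in> wset k B" and y: "y \<in> wset k B" and ab: "0 \<le> a" "0 \<le> b" "a + b = 1"
  have "(\<Sum>j\<in>UNIV. real (k j) * (a * x$j + b * y$j)) = a * (\<Sum>j\<in>UNIV. real (k j) * x$j) + b * (\<Sum>j\<in>UNIV. real (k j) * y$j)"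
    by (simp add: sum.distrib sum_distrib_left algebra_simps)
  also have "\<dots> = a * B + b * B" using x y unfolding wset_def by simp
  also have "\<dots> = (a + b) * B" by (simp add: distrib_right)
  also have "\<dots> = B" using ab by simp
  finally show "a *\<^sub>R x + b *\<^sub>R y \<in> wset k B"
    using x y ab unfolding wset_def by auto
qed

lemma wset_nonempty:
  fixes k :: "'n::finite \<Rightarrow> nat"
  assumes "(\<Sum>j\<in>UNIV. k j) > 0" and B: "B \<ge> 0"
  shows "\<exists>x. x \<in> wset k B"
proof -
  obtain j0 where j0: "k j0 > 0" using assms by (metis neq0_conv sum.neutral)
  define x :: "real^'n" where "x = (\<chi> j. if j = j0 then B / real (k j0) else 0)"
  have "(\<Sum>j\<in>UNIV. real (k j) * x$j) = real (k j0) * (B / real (k j0))"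
  proof -
    have "(\<lambda>j. real (k j) * x$j) = (\<lambda>j. if j = j0 then real (k j0) * (B / real (k j0)) else 0)"
      by (auto simp: x_def)
    then have "(\<Sum>j\<in>UNIV. real (k j) * x$j) = (\<Sum>j\<in>UNIV. if j = j0 then real (k j0) * (B / real (k j0)) else 0)"
      by (rule arg_cong)
    also have "\<dots> = real (k j0) * (B / real (k j0))" by simp
    finally show ?thesis .
  qed
  also have "\<dots> = B" using j0 by simp
  finally have sB: "(\<Sum>j\<in>UNIV. real (k j) * x$j) = B" .
  have "x \<in> wset k B" unfolding wset_def mem_Collect_eq
  proof (intro conjI allI impI)
    show "0 \<le> x$j" for j using B unfolding x_def by simp
    show "x$j = 0" if "k j = 0" for j using that j0 unfolding x_def by auto
  qed (rule sB)
  then show ?thesis by blast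
qed



definition psi :: "('n::finite \<Rightarrow> real^'n \<Rightarrow> real) \<Rightarrow> real \<Rightarrow> 'n \<Rightarrow> real^'n \<Rightarrow> real" where
  "psi v \<epsilon> j x = x$j * (\<Prod>l\<in>UNIV. max 0 (v j x - v l x + \<epsilon>))"

definition fr :: "('n::finite \<Rightarrow> real^'n \<Rightarrow> real) \<Rightarrow> real \<Rightarrow> 'n \<Rightarrow> real^'n \<Rightarrow> real" where
  "fr v \<epsilon> j x = psi v \<epsilon> j x / (\<Sum>l\<in>UNIV. psi v \<epsilon> l x)"

lemma psi_nonneg: "0 \<le> x$j \<Longrightarrow> 0 \<le> psi v \<epsilon> j x"
  unfolding psi_def by (intro mult_nonneg_nonneg prod_nonneg) auto

lemma psi_zero: "x$j = 0 \<Longrightarrow> psi v \<epsilon> j x = 0"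
  unfolding psi_def by simp

lemma psi_pos_imp:
  assumes "psi v \<epsilon> j x > 0"
  shows "v l x - \<epsilon> < v j x"
proof -
  have "(\<Prod>l\<in>UNIV. max 0 (v j x - v l x + \<epsilon>)) \<noteq> 0" using assms unfolding psi_def
    by (metis mult_zero_right less_irrefl)
  then have "max 0 (v j x - v l x + \<epsilon>) \<noteq> 0" by (auto simp: prod_zero_iff)
  then show ?thesis by (simp add: max_def split: if_splits)
qed

lemma psi_sum_pos:
  fixes v :: "'n::finite \<Rightarrow> real^'n \<Rightarrow> real"
  assumes x: "x \<in> wset k B" and B: "B > 0" and e: "\<epsilon> > 0"
    and vnn: "\<And>l. v l x \<ge> 0" and vz: "\<And>l. x$l = 0 \<Longrightarrow> v l x = 0"
  shows "(\<Sum>l\<in>UNIV. psi v \<epsilon> l x) > 0"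
proof -
  have nn: "\<And>j. 0 \<le> x$j" using x unfolding wset_def by auto
  have "\<exists>l0. x$l0 > 0"
  proof (rule ccontr)
    assume "\<not> (\<exists>l0. x$l0 > 0)"
    then have "\<forall>j. x$j = 0" using nn by (metis order_le_less)
    then have "(\<Sum>j\<in>UNIV. real (k j) * x$j) = 0" by simp
    then show False using x B unfolding wset_def by auto
  qed
  then obtain l0 where l0: "x$l0 > 0" by blast
  define M where "M = Max (range (\<lambda>l. v l x))"
  have "M \<in> range (\<lambda>l. v l x)" unfolding M_def by (rule Max_in) auto
  then obtain jm where jm: "v jm x = M" by auto
  have le: "v l x \<le> M" for l unfolding M_def by (rule Max_ge) auto
  obtain j where j: "x$j > 0" "\<And>l. v l x \<le> v j x"
  proof (cases "x$jm > 0")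
    case True then show ?thesis using that jm le by auto
  next
    case False
    then have "x$jm = 0" using nn[of jm] by simp
    then have "M = 0" using vz jm by simp
    then have "\<And>l. v l x = 0" using le vnn by (meson order_antisym)
    then show ?thesis using that l0 by auto
  qed
  have "psi v \<epsilon> j x > 0" unfolding psi_def
  proof (intro mult_pos_pos prod_pos)
    fix l show "0 < max 0 (v j x - v l x + \<epsilon>)" using j(2)[of l] e by simp
  qed (use j in auto)
  then show ?thesis
    by (intro sum_pos2[where i=j]) (auto simp: psi_nonneg nn)
qed

lemma fr_sum:
  assumes "(\<Sum>l\<in>UNIV. psi v \<epsilon> l x) > 0"
  shows "(\<Sum>j\<in>UNIV. fr v \<epsilon> j x) = 1"
  using assms unfolding fr_def by (simp add: sum_divide_distrib[symmetric])

lemma psi_cont: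
  assumes "\<And>l. continuous_on S (v l)"
  shows "continuous_on S (psi v \<epsilon> j)"
  unfolding psi_def by (intro continuous_intros assms)

lemma fr_cont:
  assumes "\<And>l. continuous_on S (v l)" and "\<And>x. x \<in> S \<Longrightarrow> (\<Sum>l\<in>UNIV. psi v \<epsilon> l x) > 0"
  shows "continuous_on S (fr v \<epsilon> j)"
proof -
  have "continuous_on S (\<lambda>x. psi v \<epsilon> j x / (\<Sum>l\<in>UNIV. psi v \<epsilon> l x))"
    using assms(2) by (intro continuous_intros psi_cont assms(1)) force
  then show ?thesis unfolding fr_def[abs_def] .
qed



lemma hall_cap:
  fixes N :: "'a \<Rightarrow> 'b::finite set" and k :: "'b \<Rightarrow> nat"
  assumes "finite I"
    and "\<forall>W\<subseteq>I. card W \<le> (\<Sum>j\<in>(\<Union>i\<in>W. N i). k j)"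
  shows "\<exists>\<sigma>. (\<forall>i\<in>I. \<sigma> i \<in> N i) \<and> (\<forall>j. card {i\<in>I. \<sigma> i = j} \<le> k j)"
  using assms
proof (induction I arbitrary: k rule: finite_psubset_induct)
  case (psubset I)
  note hall = psubset.prems
  show ?case
  proof (cases "I = {}")
    case True then show ?thesis by auto
  next
    case ne: False
    show ?thesis
    proof (cases "\<exists>W. W \<noteq> {} \<and> W \<subset> I \<and> card W = (\<Sum>j\<in>(\<Union>i\<in>W. N i). k j)")
      case True
      then obtain W where W: "W \<noteq> {}" "W \<subset> I" "card W = (\<Sum>j\<in>(\<Union>i\<in>W. N i). k j)" by blast
      have "\<exists>\<sigma>. (\<forall>i\<in>W. \<sigma> i \<in> N i) \<and> (\<forall>j. card {i\<in>W. \<sigma> i = j} \<le> k j)"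
        using psubset.IH[OF W(2)] hall W(2) by auto
      then obtain \<sigma>1 where s1: "\<forall>i\<in>W. \<sigma>1 i \<in> N i" "\<forall>j. card {i\<in>W. \<sigma>1 i = j} \<le> k j" by blast
      define NW where "NW = (\<Union>i\<in>W. N i)"
      define k2 where "k2 = (\<lambda>j. if j \<in> NW then 0 else k j)"
      have ps2: "I - W \<subset> I" using W by auto
      have hall2: "\<forall>W'\<subseteq>I - W. card W' \<le> (\<Sum>j\<in>(\<Union>i\<in>W'. N i). k2 j)"
      proof (intro allI impI)
        fix W' assume W': "W' \<subseteq> I - W"
        have fin: "finite W'" "finite W" using W' W psubset.hyps finite_subset by auto
        have "card W' + card W = card (W' \<union> W)"
          using W' fin by (subst card_Un_disjoint) auto
        also have "\<dots> \<le> (\<Sum>j\<in>(\<Union>i\<in>W' \<union> W. N i). k j)"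
          using hall[rule_format, of "W' \<union> W"] W' W by auto
        also have "(\<Union>i\<in>W' \<union> W. N i) = ((\<Union>i\<in>W'. N i) - NW) \<union> NW" unfolding NW_def by auto
        also have "(\<Sum>j\<in>((\<Union>i\<in>W'. N i) - NW) \<union> NW. k j) = (\<Sum>j\<in>(\<Union>i\<in>W'. N i) - NW. k j) + (\<Sum>j\<in>NW. k j)"
          by (rule sum.union_disjoint) auto
        also have "(\<Sum>j\<in>NW. k j) = card W" using W unfolding NW_def by simp
        also have "(\<Sum>j\<in>(\<Union>i\<in>W'. N i) - NW. k j) = (\<Sum>j\<in>(\<Union>i\<in>W'. N i). k2 j)"
          unfolding k2_def by (rule sum.mono_neutral_cong_left) auto
        finally show "card W' \<le> (\<Sum>j\<in>(\<Union>i\<in>W'. N i). k2 j)" by simp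
      qed
      obtain \<sigma>2 where s2: "\<forall>i\<in>I - W. \<sigma>2 i \<in> N i" "\<forall>j. card {i\<in>I - W. \<sigma>2 i = j} \<le> k2 j"
        using psubset.IH[OF ps2] hall2 psubset.hyps by blast
      define \<sigma> where "\<sigma> = (\<lambda>i. if i \<in> W then \<sigma>1 i else \<sigma>2 i)"
      have "\<forall>i\<in>I. \<sigma> i \<in> N i" using s1 s2 unfolding \<sigma>_def by auto
      moreover have "card {i\<in>I. \<sigma> i = j} \<le> k j" for j
      proof -
        have fin: "finite W" "finite (I - W)" using W psubset.hyps finite_subset by auto
        have eq: "{i\<in>I. \<sigma> i = j} = {i\<in>W. \<sigma>1 i = j} \<union> {i\<in>I - W. \<sigma>2 i = j}"
          using W unfolding \<sigma>_def by auto
        have c: "card {i\<in>I. \<sigma> i = j} = card {i\<in>W. \<sigma>1 i = j} + card {i\<in>I - W. \<sigma>2 i = j}"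
          unfolding eq using fin by (subst card_Un_disjoint) auto
        show ?thesis
        proof (cases "j \<in> NW")
          case True
          then have "card {i\<in>I - W. \<sigma>2 i = j} = 0" using s2(2)[rule_format, of j] unfolding k2_def by simp
          then show ?thesis using c s1(2) by simp
        next
          case False
          then have "{i\<in>W. \<sigma>1 i = j} = {}" using s1(1) unfolding NW_def by auto
          then have "card {i\<in>W. \<sigma>1 i = j} = 0" by (metis card.empty)
          then show ?thesis using c s2(2)[rule_format, of j] False unfolding k2_def by simp
        qed
      qed
      ultimately show ?thesis by blast
    next
      case False
      then have strict: "\<And>W. W \<noteq> {} \<Longrightarrow> W \<subset> I \<Longrightarrow> card W < (\<Sum>j\<in>(\<Union>i\<in>W. N i). k j)"
        using hall by (metis order_le_less psubset_imp_subset)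
      obtain i0 where i0: "i0 \<in> I" using ne by blast
      have "card {i0} \<le> (\<Sum>j\<in>N i0. k j)" using hall[rule_format, of "{i0}"] i0 by simp
      then have "\<exists>j\<in>N i0. 0 < k j"
      proof (rule contrapos_pp)
        assume "\<not> (\<exists>j\<in>N i0. 0 < k j)"
        then have "(\<Sum>j\<in>N i0. k j) = 0" by (intro sum.neutral) auto
        then show "\<not> card {i0} \<le> (\<Sum>j\<in>N i0. k j)" by simp
      qed
      then obtain j0 where j0: "j0 \<in> N i0" "k j0 > 0" by blast
      define k' where "k' = k(j0 := k j0 - 1)"
      have ps1: "I - {i0} \<subset> I" using i0 by auto
      have hall1: "\<forall>W\<subseteq>I - {i0}. card W \<le> (\<Sum>j\<in>(\<Union>i\<in>W. N i). k' j)"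
      proof (intro allI impI)
        fix W assume W: "W \<subseteq> I - {i0}"
        show "card W \<le> (\<Sum>j\<in>(\<Union>i\<in>W. N i). k' j)"
        proof (cases "W = {}")
          case True then show ?thesis by simp
        next
          case False
          then have lt: "card W < (\<Sum>j\<in>(\<Union>i\<in>W. N i). k j)" using strict W i0 by blast
          have "(\<Sum>j\<in>(\<Union>i\<in>W. N i). k j) \<le> (\<Sum>j\<in>(\<Union>i\<in>W. N i). k' j) + 1"
          proof (cases "j0 \<in> (\<Union>i\<in>W. N i)")
            case True
            have "(\<Sum>j\<in>(\<Union>i\<in>W. N i). k j) = k j0 + (\<Sum>j\<in>(\<Union>i\<in>W. N i) - {j0}. k j)"
              using True by (simp add: sum.remove)
            moreover have "(\<Sum>j\<in>(\<Union>i\<in>W. N i). k' j) = k' j0 + (\<Sum>j\<in>(\<Union>i\<in>W. N i) - {j0}. k' j)"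
              using True by (simp add: sum.remove)
            moreover have "(\<Sum>j\<in>(\<Union>i\<in>W. N i) - {j0}. k' j) = (\<Sum>j\<in>(\<Union>i\<in>W. N i) - {j0}. k j)"
              unfolding k'_def by (rule sum.cong) auto
            ultimately show ?thesis using j0 unfolding k'_def by simp
          next
            case False
            have "(\<Sum>j\<in>(\<Union>i\<in>W. N i). k' j) = (\<Sum>j\<in>(\<Union>i\<in>W. N i). k j)"
              unfolding k'_def using False by (intro sum.cong) auto
            then show ?thesis by simp
          qed
          then show ?thesis using lt by simp
        qed
      qed
      obtain \<sigma>' where s': "\<forall>i\<in>I - {i0}. \<sigma>' i \<in> N i" "\<forall>j. card {i\<in>I - {i0}. \<sigma>' i = j} \<le> k' j"
        using psubset.IH[OF ps1] hall1 psubset.hyps by blast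
      define \<sigma> where "\<sigma> = \<sigma>'(i0 := j0)"
      have "\<forall>i\<in>I. \<sigma> i \<in> N i" using s' j0 unfolding \<sigma>_def by auto
      moreover have "card {i\<in>I. \<sigma> i = j} \<le> k j" for j
      proof (cases "j = j0")
        case True
        have "{i\<in>I. \<sigma> i = j} = insert i0 {i\<in>I - {i0}. \<sigma>' i = j}" using i0 True unfolding \<sigma>_def by auto
        then have "card {i\<in>I. \<sigma> i = j} \<le> Suc (card {i\<in>I - {i0}. \<sigma>' i = j})"
          using psubset.hyps by (simp add: card_insert_if)
        then show ?thesis using s'(2)[rule_format, of j] True j0 unfolding k'_def by simp
      next
        case False
        have "{i\<in>I. \<sigma> i = j} = {i\<in>I - {i0}. \<sigma>' i = j}" using False unfolding \<sigma>_def by auto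
        then show ?thesis using s'(2)[rule_format, of j] False unfolding k'_def by simp
      qed
      ultimately show ?thesis by blast
    qed
  qed
qed


lemma frac_to_int:
  fixes A :: "'a::finite \<Rightarrow> 'b::finite \<Rightarrow> real" and k :: "'b \<Rightarrow> nat"
  assumes nonneg: "\<And>i j. A i j \<ge> 0"
    and rows: "\<And>i. (\<Sum>j\<in>UNIV. A i j) = 1"
    and cols: "\<And>j. (\<Sum>i\<in>UNIV. A i j) = real (k j)"
  shows "\<exists>\<sigma>. (\<forall>i. A i (\<sigma> i) > 0) \<and> (\<forall>j. card {i. \<sigma> i = j} = k j)"
proof -
  define N where "N = (\<lambda>i. {j. A i j > 0})"
  have hall: "\<forall>W\<subseteq>UNIV. card W \<le> (\<Sum>j\<in>(\<Union>i\<in>W. N i). k j)"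
  proof (intro allI impI)
    fix W :: "'a set"
    define NW where "NW = (\<Union>i\<in>W. N i)"
    have "real (card W) = (\<Sum>i\<in>W. \<Sum>j\<in>UNIV. A i j)" using rows by simp
    also have "\<dots> = (\<Sum>i\<in>W. \<Sum>j\<in>NW. A i j)"
    proof (rule sum.cong[OF refl])
      fix i assume "i \<in> W"
      then show "(\<Sum>j\<in>UNIV. A i j) = (\<Sum>j\<in>NW. A i j)"
        using nonneg unfolding NW_def N_def
        by (intro sum.mono_neutral_right) (auto simp: order_le_less)
    qed
    also have "\<dots> = (\<Sum>j\<in>NW. \<Sum>i\<in>W. A i j)" by (rule sum.swap)
    also have "\<dots> \<le> (\<Sum>j\<in>NW. \<Sum>i\<in>UNIV. A i j)"
      by (intro sum_mono sum_mono2) (auto simp: nonneg)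
    also have "\<dots> = real (\<Sum>j\<in>NW. k j)" using cols by simp
    finally show "card W \<le> (\<Sum>j\<in>(\<Union>i\<in>W. N i). k j)" unfolding NW_def by linarith
  qed
  obtain \<sigma> where s: "\<forall>i\<in>UNIV. \<sigma> i \<in> N i" "\<forall>j. card {i\<in>UNIV. \<sigma> i = j} \<le> k j"
    using hall_cap[OF finite hall] by blast
  have le: "card {i. \<sigma> i = j} \<le> k j" for j using s(2) by simp
  have "real (\<Sum>j\<in>UNIV. k j) = (\<Sum>j\<in>UNIV. \<Sum>i\<in>UNIV. A i j)" using cols by simp
  also have "\<dots> = (\<Sum>i\<in>UNIV. \<Sum>j\<in>UNIV. A i j)" by (rule sum.swap)
  also have "\<dots> = real CARD('a)" using rows by simp
  finally have sk: "(\<Sum>j\<in>UNIV. k j) = CARD('a)" by linarith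
  have "CARD('a) = card (\<Union>j\<in>UNIV. {i. \<sigma> i = j})" by (rule arg_cong[where f=card]) auto
  also have "\<dots> = (\<Sum>j\<in>UNIV. card {i. \<sigma> i = j})" by (rule card_UN_disjoint) auto
  finally have sc: "(\<Sum>j\<in>UNIV. card {i. \<sigma> i = j}) = (\<Sum>j\<in>UNIV. k j)" using sk by simp
  have "card {i. \<sigma> i = j} = k j" for j
  proof (rule ccontr)
    assume "card {i. \<sigma> i = j} \<noteq> k j"
    then have "card {i. \<sigma> i = j} < k j" using le[of j] by simp
    then have "(\<Sum>j\<in>UNIV. card {i. \<sigma> i = j}) < (\<Sum>j\<in>UNIV. k j)"
      by (intro sum_strict_mono_ex1) (auto simp: le)
    then show False using sc by simp
  qed
  moreover have "\<forall>i. A i (\<sigma> i) > 0" using s(1) unfolding N_def by auto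
  ultimately show ?thesis by blast
qed



lemma eps_lemma:
  fixes u :: "'m::finite \<Rightarrow> 'n::finite \<Rightarrow> real^'n \<Rightarrow> real"
    and k :: "'n \<Rightarrow> nat" and B \<epsilon> :: real
  assumes u_nonneg: "\<And>i j x. (\<forall>l. x $ l \<ge> 0) \<Longrightarrow> u i j x \<ge> 0"
    and u_cont: "\<And>i j. continuous_on {x. \<forall>l. x $ l \<ge> 0} (u i j)"
    and u_zero: "\<And>i j x. (\<forall>l. x $ l \<ge> 0) \<Longrightarrow> x $ j = 0 \<Longrightarrow> u i j x = 0"
    and k_sum: "(\<Sum>j\<in>UNIV. k j) = CARD('m)"
    and B_pos: "B > 0" and e_pos: "\<epsilon> > 0"
  shows "\<exists>x \<sigma>. x \<in> wset k B \<and> (\<forall>j. card {i. \<sigma> i = j} = k j) \<and>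
           (\<forall>i l. u i l x - \<epsilon> \<le> u i (\<sigma> i) x)"
proof -
  define W where "W = wset k B"
  define m where "m = real CARD('m)"
  have m_pos: "m > 0" unfolding m_def by simp
  define f where "f = (\<lambda>i j x. fr (u i) \<epsilon> j x)"
  define F where "F = (\<lambda>j x. (\<Sum>i\<in>UNIV. f i j x) / m)"
  define p where "p = (\<lambda>j. real (k j) / m)"
  define e where "e = (\<lambda>j x. max 0 (p j - F j x))"
  define S where "S = (\<lambda>x. \<Sum>j\<in>UNIV. e j x)"
  define G where "G = (\<lambda>x. \<chi> j. (x$j + B / real (k j) * e j x) / (1 + S x))"
  have Wnn: "\<And>x. x \<in> W \<Longrightarrow> \<forall>l. x$l \<ge> 0" unfolding W_def wset_def by auto
  have Wsub: "W \<subseteq> {x. \<forall>l. x $ l \<ge> 0}" using Wnn by auto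
  have ucW: "continuous_on W (u i j)" for i j using u_cont continuous_on_subset Wsub by blast
  have dpos: "(\<Sum>l\<in>UNIV. psi (u i) \<epsilon> l x) > 0" if "x \<in> W" for i x
    using that B_pos e_pos u_nonneg[OF Wnn[OF that]] u_zero[OF Wnn[OF that]]
    unfolding W_def by (intro psi_sum_pos) auto
  have f_nn: "f i j x \<ge> 0" if "x \<in> W" for i j x
    using dpos[OF that, of i] Wnn[OF that] unfolding f_def fr_def
    by (intro divide_nonneg_nonneg psi_nonneg) auto
  have f_row: "(\<Sum>j\<in>UNIV. f i j x) = 1" if "x \<in> W" for i x
    unfolding f_def using fr_sum dpos[OF that] by blast
  have f_zero: "f i j x = 0" if "x$j = 0" for i j x
    unfolding f_def fr_def using psi_zero[OF that] by simp
  have f_cont: "continuous_on W (f i j)" for i j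
    unfolding f_def using dpos by (intro fr_cont ucW) auto
  have F_nn: "F j x \<ge> 0" if "x \<in> W" for j x
    unfolding F_def using f_nn[OF that] m_pos by (simp add: sum_nonneg)
  have F_sum: "(\<Sum>j\<in>UNIV. F j x) = 1" if "x \<in> W" for x
  proof -
    have "(\<Sum>j\<in>UNIV. F j x) = (\<Sum>j\<in>UNIV. \<Sum>i\<in>UNIV. f i j x) / m"
      unfolding F_def by (simp add: sum_divide_distrib)
    also have "\<dots> = (\<Sum>i\<in>UNIV. \<Sum>j\<in>UNIV. f i j x) / m" by (rule arg_cong[where f="\<lambda>t. t / m"], rule sum.swap)
    also have "\<dots> = 1" using f_row[OF that] m_pos unfolding m_def by simp
    finally show ?thesis .
  qed
  have p_nn: "p j \<ge> 0" for j unfolding p_def using m_pos by simp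
  have p_sum: "(\<Sum>j\<in>UNIV. p j) = 1"
  proof -
    have "(\<Sum>j\<in>UNIV. p j) = real (\<Sum>j\<in>UNIV. k j) / m" unfolding p_def by (simp add: sum_divide_distrib)
    also have "\<dots> = 1" using k_sum m_pos unfolding m_def by simp
    finally show ?thesis .
  qed
  have e_nn: "e j x \<ge> 0" for j x unfolding e_def by simp
  have S_nn: "S x \<ge> 0" for x unfolding S_def by (simp add: sum_nonneg e_nn)
  have e_k0: "e j x = 0" if "x \<in> W" "k j = 0" for j x
    using F_nn[OF that(1), of j] that(2) unfolding e_def p_def by simp
  have F_cont: "continuous_on W (F j)" for j
    unfolding F_def by (intro continuous_intros f_cont) (use m_pos in auto)
  have e_cont: "continuous_on W (e j)" for j
    unfolding e_def by (intro continuous_intros F_cont)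
  have S_cont: "continuous_on W S"
    unfolding S_def by (intro continuous_intros e_cont)
  have G_cont: "continuous_on W G"
  proof -
    have S1: "1 + S x \<noteq> 0" for x using S_nn[of x] by linarith
    show ?thesis unfolding G_def using S1
      by (intro continuous_intros e_cont S_cont) auto
  qed
  have G_maps: "G x \<in> W" if x: "x \<in> W" for x
  proof -
    have xW: "\<forall>j. 0 \<le> x$j" "\<forall>j. k j = 0 \<longrightarrow> x$j = 0" "(\<Sum>j\<in>UNIV. real (k j) * x$j) = B"
      using x unfolding W_def wset_def by auto
    have d: "1 + S x > 0" using S_nn[of x] by simp
    have ke: "real (k j) * (B / real (k j) * e j x) = B * e j x" for j
      using e_k0[OF x, of j] by (cases "k j = 0") auto
    have "(\<Sum>j\<in>UNIV. real (k j) * G x $ j) = (\<Sum>j\<in>UNIV. (real (k j) * x$j + B * e j x) / (1 + S x))"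
    proof (rule sum.cong[OF refl])
      fix j
      have "real (k j) * G x $ j = (real (k j) * x$j + real (k j) * (B / real (k j) * e j x)) / (1 + S x)"
        unfolding G_def by (simp only: vec_lambda_beta times_divide_eq_right distrib_left)
      then show "real (k j) * G x $ j = (real (k j) * x$j + B * e j x) / (1 + S x)" by (simp only: ke)
    qed
    also have "\<dots> = (\<Sum>j\<in>UNIV. real (k j) * x$j + B * e j x) / (1 + S x)"
      by (rule sum_divide_distrib[symmetric])
    also have "\<dots> = (B + B * S x) / (1 + S x)"
      using xW(3) unfolding S_def by (simp add: sum.distrib sum_distrib_left)
    also have "\<dots> = B" using d by (simp add: field_simps)
    finally have s: "(\<Sum>j\<in>UNIV. real (k j) * G x $ j) = B" .
    show ?thesis unfolding W_def wset_def mem_Collect_eq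
    proof (intro conjI allI impI s)
      fix j show "0 \<le> G x $ j" unfolding G_def using d xW(1) e_nn[of j x] B_pos by simp
    next
      fix j assume "k j = 0" then show "G x $ j = 0" unfolding G_def using xW(2) by simp
    qed
  qed
  have ksp: "(\<Sum>j\<in>UNIV. k j) > 0" using k_sum by simp
  obtain x where xW: "x \<in> W" and fx: "G x = x"
  proof (rule brouwer[of W G])
    show "compact W" unfolding W_def by (rule wset_compact)
    show "convex W" unfolding W_def by (rule wset_convex)
    show "W \<noteq> {}" using wset_nonempty[OF ksp, of B] B_pos unfolding W_def by auto
    show "continuous_on W G" by (rule G_cont)
    show "G \<in> W \<rightarrow> W" using G_maps by auto
  qed (rule that)
  have comp: "x$j * S x = B / real (k j) * e j x" for j
  proof -
    have d: "1 + S x > 0" using S_nn[of x] by simp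
    have "x$j = (x$j + B / real (k j) * e j x) / (1 + S x)"
      using arg_cong[OF fx, of "\<lambda>y. y$j"] unfolding G_def by simp
    then have "x$j * (1 + S x) = x$j + B / real (k j) * e j x" using d by (simp add: field_simps)
    then show ?thesis by (simp add: algebra_simps)
  qed
  have S0: "S x = 0"
  proof (rule ccontr)
    assume "S x \<noteq> 0"
    then have Sp: "S x > 0" using S_nn[of x] by simp
    have "\<exists>j. e j x > 0"
    proof (rule ccontr)
      assume "\<not> (\<exists>j. e j x > 0)"
      then have "\<forall>j. e j x = 0" using e_nn by (metis order_le_less)
      then show False using Sp unfolding S_def by simp
    qed
    then obtain j where "e j x > 0" by blast
    then have Fj: "F j x < p j" unfolding e_def by simp
    have "\<exists>j'. F j' x > p j'"
    proof (rule ccontr)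
      assume "\<not> (\<exists>j'. F j' x > p j')"
      then have "\<forall>j'. F j' x \<le> p j'" by (simp add: not_less)
      then have "(\<Sum>j\<in>UNIV. F j x) < (\<Sum>j\<in>UNIV. p j)"
        using Fj by (intro sum_strict_mono_ex1) auto
      then show False using F_sum[OF xW] p_sum by simp
    qed
    then obtain j' where j': "F j' x > p j'" by blast
    then have "e j' x = 0" unfolding e_def by simp
    then have "x$j' * S x = 0" using comp[of j'] by simp
    then have "x$j' = 0" using Sp by simp
    then have "F j' x = 0" unfolding F_def using f_zero by simp
    then show False using j' p_nn[of j'] by simp
  qed
  have Fp: "F j x = p j" for j
  proof -
    have "\<forall>j. e j x = 0" using S0 unfolding S_def by (simp add: sum_nonneg_eq_0_iff e_nn)
    then have le: "\<forall>j. p j \<le> F j x" unfolding e_def by (metis max.absorb_iff1 diff_le_0_iff_le)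
    show ?thesis
    proof (rule ccontr)
      assume "F j x \<noteq> p j"
      then have "p j < F j x" using le[rule_format, of j] by linarith
      then have "(\<Sum>j\<in>UNIV. p j) < (\<Sum>j\<in>UNIV. F j x)"
        using le by (intro sum_strict_mono_ex1) auto
      then show False using F_sum[OF xW] p_sum by simp
    qed
  qed
  have cols: "(\<Sum>i\<in>UNIV. f i j x) = real (k j)" for j
    using Fp[of j] m_pos unfolding F_def p_def by (simp add: field_simps)
  obtain \<sigma> where \<sigma>: "\<forall>i. f i (\<sigma> i) x > 0" "\<forall>j. card {i. \<sigma> i = j} = k j"
    using frac_to_int[of "\<lambda>i j. f i j x" k] f_nn[OF xW] f_row[OF xW] cols by blast
  have "u i l x - \<epsilon> \<le> u i (\<sigma> i) x" for i l
  proof -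
    have "f i (\<sigma> i) x > 0" using \<sigma>(1) by blast
    then have "psi (u i) \<epsilon> (\<sigma> i) x > 0"
      using dpos[OF xW, of i] unfolding f_def fr_def by (simp add: zero_less_divide_iff)
    then show ?thesis using psi_pos_imp[of "u i" \<epsilon> "\<sigma> i" x l] by simp
  qed
  then show ?thesis using xW \<sigma>(2) unfolding W_def by blast
qed



theorem theorem2p5:
  fixes u :: "'m::finite \<Rightarrow> 'n::finite \<Rightarrow> real^'n \<Rightarrow> real"
    and k :: "'n \<Rightarrow> nat"
    and B :: real
  assumes u_nonneg: "\<And>i j x. (\<forall>l. x $ l \<ge> 0) \<Longrightarrow> u i j x \<ge> 0"
    and u_cont: "\<And>i j. continuous_on {x. \<forall>l. x $ l \<ge> 0} (u i j)"
    and u_zero: "\<And>i j x. (\<forall>l. x $ l \<ge> 0) \<Longrightarrow> x $ j = 0 \<Longrightarrow> u i j x = 0"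
    and k_sum: "(\<Sum>j\<in>UNIV. k j) = CARD('m)"
    and B_pos: "B > 0"
  shows "\<exists>x :: real^'n. \<exists>\<sigma> :: 'm \<Rightarrow> 'n.
           (\<forall>j. x $ j \<ge> 0) \<and>
           (\<Sum>j\<in>UNIV. real (k j) * x $ j) = B \<and>
           (\<forall>j. card {i. \<sigma> i = j} = k j) \<and>
           (\<forall>i j'. u i (\<sigma> i) x \<ge> u i j' x)"
proof -
  define W where "W = wset k B"
  have "\<forall>n. \<exists>x \<sigma>. x \<in> W \<and> (\<forall>j. card {i. \<sigma> i = j} = k j) \<and>
           (\<forall>i l. u i l x - inverse (real (Suc n)) \<le> u i (\<sigma> i) x)"
  proof
    fix n
    show "\<exists>x \<sigma>. x \<in> W \<and> (\<forall>j. card {i. \<sigma> i = j} = k j) \<and>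
           (\<forall>i l. u i l x - inverse (real (Suc n)) \<le> u i (\<sigma> i) x)"
      unfolding W_def by (rule eps_lemma[OF u_nonneg u_cont u_zero k_sum B_pos]) auto
  qed
  then obtain X \<Sigma> where XS: "\<And>n. X n \<in> W" "\<And>n j. card {i. \<Sigma> n i = j} = k j"
    "\<And>n i l. u i l (X n) - inverse (real (Suc n)) \<le> u i (\<Sigma> n i) (X n)"
    by metis
  have "finite (range \<Sigma>)" by simp
  then obtain \<sigma>0 where "infinite (\<Sigma> -` {\<sigma>0})"
    using inf_img_fin_domE[of \<Sigma> UNIV] by auto
  then obtain r :: "nat \<Rightarrow> nat" where r: "strict_mono r" "\<And>n. \<Sigma> (r n) = \<sigma>0"
    using infinite_enumerate by blast
  have "seq_compact W" unfolding W_def by (rule compact_imp_seq_compact[OF wset_compact])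
  obtain x r2 where x: "x \<in> W" and r2: "strict_mono (r2 :: nat \<Rightarrow> nat)" and lim: "((X \<circ> r) \<circ> r2) \<longlonglongrightarrow> x"
  proof -
    have "\<forall>n. (X \<circ> r) n \<in> W" using XS(1) by simp
    then show ?thesis using seq_compactE[OF \<open>seq_compact W\<close>] that by blast
  qed
  define t where "t = r \<circ> r2"
  have t: "strict_mono t" unfolding t_def using r(1) r2 by (rule strict_mono_o)
  have limX: "(\<lambda>n. X (t n)) \<longlonglongrightarrow> x" using lim unfolding t_def by (simp add: o_def)
  have Wsub: "W \<subseteq> {x. \<forall>l. x $ l \<ge> 0}" unfolding W_def wset_def by auto
  have limu: "(\<lambda>n. u i j (X (t n))) \<longlonglongrightarrow> u i j x" for i j
  proof -
    have "continuous_on W (u i j)" using u_cont Wsub continuous_on_subset by blast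
    then show ?thesis
      by (rule continuous_on_tendsto_compose[OF _ limX x]) (simp add: XS(1))
  qed
  have limeps: "(\<lambda>n. inverse (real (Suc (t n)))) \<longlonglongrightarrow> 0"
    using LIMSEQ_subseq_LIMSEQ[OF LIMSEQ_inverse_real_of_nat t] by (simp add: o_def)
  have happy: "u i j' x \<le> u i (\<sigma>0 i) x" for i j'
  proof -
    have "(\<lambda>n. u i j' (X (t n)) - inverse (real (Suc (t n)))) \<longlonglongrightarrow> u i j' x - 0"
      by (intro tendsto_diff limu limeps)
    moreover have "\<forall>n. u i j' (X (t n)) - inverse (real (Suc (t n))) \<le> u i (\<sigma>0 i) (X (t n))"
    proof
      fix n
      have "u i j' (X (t n)) - inverse (real (Suc (t n))) \<le> u i (\<Sigma> (t n) i) (X (t n))"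
        by (rule XS(3))
      moreover have "\<Sigma> (t n) = \<sigma>0" using r(2) unfolding t_def by simp
      ultimately show "u i j' (X (t n)) - inverse (real (Suc (t n))) \<le> u i (\<sigma>0 i) (X (t n))" by simp
    qed
    ultimately show ?thesis
      by (intro tendsto_le[OF trivial_limit_sequentially limu[of i "\<sigma>0 i"]]) auto
  qed
  have cnt: "card {i. \<sigma>0 i = j} = k j" for j using XS(2)[of "r 0" j] r(2)[of 0] by simp
  show ?thesis
    using x happy cnt unfolding W_def wset_def by blast
qed


end
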